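(* Let $U=(E,\mathcal{D},\rho)$ be a U-matroid with $E\setminus\mathrm{Atom}(\mathcal{D})=\{a_1,\dots,a_m\}$, where $\mathrm{Atom}(\mathcal{D})=\{a\in E:\{a\}\in\mathcal{D}\}$. Then: 1. The iterated generous extension $\hat\rho=\rho_{a_1,\dots,a_m}=(((\rho_{a_1})_{a_2})\dots)_{a_m}$, a matroid rank function on $2^E$, dominates every other matroid extension of $\rho$ to $2^E$ (i.e. $\hat\rho(S)\ge\rho'(S)$ for all $S$ and every matroid rank function $\rho'$ on $2^E$ with $\rho'|_{\mathcal{D}}=\rho$). 2. In particular, $\hat\rho$ is an invariant of $\rho$ that is independent of the order of the $a_i$ and dominates every other matroid extension of $\rho$. 3. For every lattice $\mathcal{D}'$ with $\mathcal{D}\subseteq\mathcal{D}'\subseteq 2^E$, the lattice extension $\hat\rho|_{\mathcal{D}'}$ dominates every other lattice extension of $U$ to $\mathcal{D}'$ (U-matroid rank function on $\mathcal{D}'$ restricting to $\rho$ on $\mathcal{D}$).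
   Context: A U-matroid is a triple $(E,\mathcal{D},\rho)$ with $E$ finite, $\mathcal{D}\subseteq2^E$ an accessible distributive lattice of sets (closed under union and intersection, containing $\emptyset,E$, every nonempty member $A$ has some $x\in A$ with $A-x\in\mathcal{D}$), and $\rho:\mathcal{D}\to\mathbb{N}$ with $\rho(\emptyset)=0$, monotone, submodular, with unit increase. For $a\in E\setminus\mathrm{Atom}(\mathcal{D})$, let $\mathcal{D}[a]=\mathcal{D}\cup\{S\cup\{a\}:S\in\mathcal{D}\}$ and $\sup_\mathcal{D}(S)$ the smallest element of $\mathcal{D}$ containing $S$. The generous atom extension $\rho_a:\mathcal{D}[a]\to\mathbb{N}$ is defined by $\rho_a(S)=\rho(S)$ if $S\in\mathcal{D}$; $\rho_a(S)=\rho(S-a)$ if $S\notin\mathcal{D}$ and $\rho(S-a)=\rho(\sup_\mathcal{D}(S))$; and $\rho_a(S)=\rho(S-a)+1$ if $S\notin\mathcal{D}$ and $\rho(S-a)<\rho(\sup_\mathcal{D}(S))$. It is known that $(E,\mathcal{D}[a],\rho_a)$ is again a U-matroid, so the extension can be iterated. *)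

theory Defs
  imports Main
begin

definition acc_lattice :: "'a set \<Rightarrow> 'a set set \<Rightarrow> bool" where
  "acc_lattice E D \<longleftrightarrow>
     D \<subseteq> Pow E \<and> {} \<in> D \<and> E \<in> D \<and>
     (\<forall>A\<in>D. \<forall>B\<in>D. A \<union> B \<in> D \<and> A \<inter> B \<in> D) \<and>
     (\<forall>A\<in>D. A \<noteq> {} \<longrightarrow> (\<exists>x\<in>A. A - {x} \<in> D))"

text \<open>U-matroid (E, D, rho); rho is only relevant on D.\<close>
definition umatroid :: "'a set \<Rightarrow> 'a set set \<Rightarrow> ('a set \<Rightarrow> nat) \<Rightarrow> bool" where
  "umatroid E D rho \<longleftrightarrow>
     finite E \<and> acc_lattice E D \<and> rho {} = 0 \<and>
     (\<forall>A\<in>D. \<forall>B\<in>D. A \<subseteq> B \<longrightarrow> rho A \<le> rho B) \<and>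
     (\<forall>A\<in>D. \<forall>B\<in>D. rho (A \<union> B) + rho (A \<inter> B) \<le> rho A + rho B) \<and>
     (\<forall>A\<in>D. \<forall>x. insert x A \<in> D \<longrightarrow> rho (insert x A) \<le> rho A + 1)"

definition Atom :: "'a set set \<Rightarrow> 'a set" where
  "Atom D = {a. {a} \<in> D}"

definition lat_ext :: "'a set set \<Rightarrow> 'a \<Rightarrow> 'a set set" where
  "lat_ext D a = D \<union> {insert a S | S. S \<in> D}"

definition sup_D :: "'a set set \<Rightarrow> 'a set \<Rightarrow> 'a set" where
  "sup_D D S = \<Inter> {T \<in> D. S \<subseteq> T}"

definition gen_ext :: "'a set set \<Rightarrow> ('a set \<Rightarrow> nat) \<Rightarrow> 'a \<Rightarrow> 'a set \<Rightarrow> nat" where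
  "gen_ext D rho a S =
     (if S \<in> D then rho S
      else if rho (S - {a}) = rho (sup_D D S) then rho (S - {a})
      else rho (S - {a}) + 1)"

fun gen_iter :: "'a set set \<Rightarrow> ('a set \<Rightarrow> nat) \<Rightarrow> 'a list \<Rightarrow> 'a set set \<times> ('a set \<Rightarrow> nat)" where
  "gen_iter D rho [] = (D, rho)"
| "gen_iter D rho (a # as) = gen_iter (lat_ext D a) (gen_ext D rho a) as"

end

theory Submission
  imports Defs
begin

lemma um_D:
  assumes "umatroid E D rho"
  shows "finite E" "D \<subseteq> Pow E" "{} \<in> D" "E \<in> D"
    "\<And>A B. A\<in>D \<Longrightarrow> B\<in>D \<Longrightarrow> A\<union>B \<in> D"
    "\<And>A B. A\<in>D \<Longrightarrow> B\<in>D \<Longrightarrow> A\<inter>B \<in> D"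
    "\<And>A. A \<in> D \<Longrightarrow> A \<noteq> {} \<Longrightarrow> \<exists>x\<in>A. A - {x} \<in> D"
    "rho {} = 0"
    "\<And>A B. A\<in>D \<Longrightarrow> B\<in>D \<Longrightarrow> A \<subseteq> B \<Longrightarrow> rho A \<le> rho B"
    "\<And>A B. A\<in>D \<Longrightarrow> B\<in>D \<Longrightarrow> rho (A\<union>B) + rho (A\<inter>B) \<le> rho A + rho B"
    "\<And>A x. A \<in> D \<Longrightarrow> insert x A \<in> D \<Longrightarrow> rho (insert x A) \<le> rho A + 1"
  using assms unfolding umatroid_def acc_lattice_def by (simp_all add: subset_iff)

lemma al_D:
  assumes "acc_lattice E D"
  shows "D \<subseteq> Pow E" "{} \<in> D" "E \<in> D"
    "\<And>A B. A\<in>D \<Longrightarrow> B\<in>D \<Longrightarrow> A\<union>B \<in> D"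
    "\<And>A B. A\<in>D \<Longrightarrow> B\<in>D \<Longrightarrow> A\<inter>B \<in> D"
    "\<And>A. A \<in> D \<Longrightarrow> A \<noteq> {} \<Longrightarrow> \<exists>x\<in>A. A - {x} \<in> D"
  using assms unfolding acc_lattice_def by (simp_all add: subset_iff)

lemma Inter_in_aux: "finite F \<Longrightarrow> F \<noteq> {} \<Longrightarrow> F \<subseteq> D \<Longrightarrow> (\<forall>A\<in>D. \<forall>B\<in>D. A\<inter>B \<in> D) \<Longrightarrow> \<Inter>F \<in> D"
  by (induction F rule: finite_ne_induct) auto

lemma Union_in_aux: "finite F \<Longrightarrow> F \<subseteq> D \<Longrightarrow> {} \<in> D \<Longrightarrow> (\<forall>A\<in>D. \<forall>B\<in>D. A\<union>B \<in> D) \<Longrightarrow> \<Union>F \<in> D"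
  by (induction F rule: finite_induct) auto

lemma sup_props:
  assumes L: "acc_lattice E D" and fin: "finite E" and S: "S \<subseteq> E"
  shows "sup_D D S \<in> D" "S \<subseteq> sup_D D S" "\<And>T. T \<in> D \<Longrightarrow> S \<subseteq> T \<Longrightarrow> sup_D D S \<subseteq> T"
proof -
  let ?F = "{T \<in> D. S \<subseteq> T}"
  have "?F \<subseteq> Pow E" using al_D(1)[OF L] by auto
  hence "finite ?F" using fin by (meson finite_Pow_iff finite_subset)
  moreover have "?F \<noteq> {}" using al_D(3)[OF L] S by auto
  ultimately show "sup_D D S \<in> D" unfolding sup_D_def
    using Inter_in_aux[of ?F D] al_D(5)[OF L] by blast
  show "S \<subseteq> sup_D D S" unfolding sup_D_def by auto
  show "\<And>T. T \<in> D \<Longrightarrow> S \<subseteq> T \<Longrightarrow> sup_D D S \<subseteq> T" unfolding sup_D_def by auto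
qed

lemma rank_diff:
  assumes U: "umatroid E D rho"
  shows "Y \<in> D \<Longrightarrow> X \<in> D \<Longrightarrow> X \<subseteq> Y \<Longrightarrow> rho Y \<le> rho X + card (Y - X)"
proof (induction "card Y" arbitrary: X Y rule: less_induct)
  case less
  note D = um_D[OF U]
  have "Y \<subseteq> E" using less.prems D(2) by auto
  hence finY: "finite Y" using D(1) by (rule finite_subset)
  show ?case
  proof (cases "Y = {}")
    case True then show ?thesis using less.prems by auto
  next
    case False
    then obtain y where y: "y \<in> Y" "Y - {y} \<in> D" using D(7) less.prems by blast
    have cl: "card (Y - {y}) < card Y" using finY y(1) by (rule card_Diff1_less)
    show ?thesis
    proof (cases "y \<in> X")
      case True
      have "X - {y} = X \<inter> (Y - {y})" using less.prems by auto
      hence Xy: "X - {y} \<in> D" using D(6)[OF less.prems(2) y(2)] by simp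
      have ih: "rho (Y - {y}) \<le> rho (X - {y}) + card ((Y - {y}) - (X - {y}))"
        using less.hyps[OF cl y(2) Xy] less.prems by blast
      have e1: "(Y - {y}) - (X - {y}) = Y - X" using True by auto
      have sm: "rho ((Y - {y}) \<union> X) + rho ((Y - {y}) \<inter> X) \<le> rho (Y - {y}) + rho X"
        using D(10)[OF y(2) less.prems(2)] .
      have e2: "(Y - {y}) \<union> X = Y" using True less.prems y by auto
      have e3: "(Y - {y}) \<inter> X = X - {y}" using less.prems by auto
      show ?thesis using ih sm e1 e2 e3 by simp
    next
      case False
      have ih: "rho (Y - {y}) \<le> rho X + card ((Y - {y}) - X)"
        using less.hyps[OF cl y(2) less.prems(2)] less.prems False by blast
      have c: "card (Y - X) = card ((Y - {y}) - X) + 1"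
      proof -
        have "Y - X = insert y ((Y - {y}) - X)" using y False by auto
        moreover have "finite ((Y - {y}) - X)" using finY by auto
        ultimately show ?thesis by simp
      qed
      have "insert y (Y - {y}) = Y" using y by auto
      hence "rho Y \<le> rho (Y - {y}) + 1" using D(11)[OF y(2)] less.prems(1) by metis
      then show ?thesis using ih c by simp
    qed
  qed
qed


lemma mem_lat_ext: "X \<in> lat_ext D a \<longleftrightarrow> X \<in> D \<or> (a \<in> X \<and> X - {a} \<in> D)"
proof
  assume "X \<in> lat_ext D a"
  then consider "X \<in> D" | S where "S \<in> D" "X = insert a S" unfolding lat_ext_def by blast
  then show "X \<in> D \<or> (a \<in> X \<and> X - {a} \<in> D)"
  proof cases
    case 2
    show ?thesis
    proof (cases "a \<in> S")
      case True then show ?thesis using 2 by (simp add: insert_absorb)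
    next
      case False then have "X - {a} = S" using 2 by auto
      then show ?thesis using 2 by auto
    qed
  qed simp
next
  assume "X \<in> D \<or> (a \<in> X \<and> X - {a} \<in> D)"
  then show "X \<in> lat_ext D a" unfolding lat_ext_def
  proof
    assume h: "a \<in> X \<and> X - {a} \<in> D"
    hence "X = insert a (X - {a})" by auto
    with h show "X \<in> D \<union> {insert a S |S. S \<in> D}" by blast
  qed simp
qed

lemma lat_ext_lattice:
  assumes L: "acc_lattice E D" and a: "a \<in> E"
  shows "acc_lattice E (lat_ext D a)"
proof -
  note D = al_D[OF L]
  let ?D = "lat_ext D a"
  have sub: "?D \<subseteq> Pow E"
  proof
    fix X assume "X \<in> ?D"
    then consider "X \<in> D" | "a \<in> X" "X - {a} \<in> D" by (auto simp: mem_lat_ext)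
    then show "X \<in> Pow E" proof cases
      case 1 then show ?thesis using D(1) by blast
    next
      case 2 then have "X - {a} \<subseteq> E" using D(1) by blast
      then show ?thesis using a by auto
    qed
  qed
  have e: "{} \<in> ?D" "E \<in> ?D" using D(2,3) by (auto simp: mem_lat_ext)
  have un: "A \<union> B \<in> ?D" if A: "A \<in> ?D" and B: "B \<in> ?D" for A B
  proof (cases "a \<in> A \<union> B")
    case False
    then have "A \<in> D" "B \<in> D" using A B by (auto simp: mem_lat_ext)
    then show ?thesis using D(4) by (auto simp: mem_lat_ext)
  next
    case True
    have "A \<union> B \<in> D \<or> (A \<union> B) - {a} \<in> D"
    proof -
      consider "A \<in> D" "B \<in> D" | "A \<notin> D" "B \<in> D" | "A \<in> D" "B \<notin> D" | "A \<notin> D" "B \<notin> D" by blast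
      then show ?thesis
      proof cases
        case 1 then show ?thesis using D(4) by blast
      next
        case 2
        then have A': "a \<in> A" "A - {a} \<in> D" using A by (auto simp: mem_lat_ext)
        show ?thesis
        proof (cases "a \<in> B")
          case True
          then have "A \<union> B = (A - {a}) \<union> B" using A' by auto
          then show ?thesis using D(4)[OF A'(2) 2(2)] by simp
        next
          case False
          then have "(A \<union> B) - {a} = (A - {a}) \<union> B" by auto
          then show ?thesis using D(4)[OF A'(2) 2(2)] by simp
        qed
      next
        case 3
        then have B': "a \<in> B" "B - {a} \<in> D" using B by (auto simp: mem_lat_ext)
        show ?thesis
        proof (cases "a \<in> A")
          case True
          then have "A \<union> B = A \<union> (B - {a})" using B' by auto
          then show ?thesis using D(4)[OF 3(1) B'(2)] by simp
        next
          case False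
          then have "(A \<union> B) - {a} = A \<union> (B - {a})" by auto
          then show ?thesis using D(4)[OF 3(1) B'(2)] by simp
        qed
      next
        case 4
        then have A': "a \<in> A" "A - {a} \<in> D" using A by (auto simp: mem_lat_ext)
        have B': "a \<in> B" "B - {a} \<in> D" using 4 B by (auto simp: mem_lat_ext)
        have "(A \<union> B) - {a} = (A - {a}) \<union> (B - {a})" by auto
        then show ?thesis using D(4)[OF A'(2) B'(2)] by simp
      qed
    qed
    then show ?thesis using True by (auto simp: mem_lat_ext)
  qed
  have int: "A \<inter> B \<in> ?D" if A: "A \<in> ?D" and B: "B \<in> ?D" for A B
  proof -
    have "A \<inter> B \<in> D \<or> (A \<inter> B) - {a} \<in> D"
    proof -
      consider "A \<in> D" "B \<in> D" | "A \<notin> D" "B \<in> D" | "A \<in> D" "B \<notin> D" | "A \<notin> D" "B \<notin> D" by blast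
      then show ?thesis
      proof cases
        case 1 then show ?thesis using D(5) by blast
      next
        case 2
        then have A': "a \<in> A" "A - {a} \<in> D" using A by (auto simp: mem_lat_ext)
        show ?thesis
        proof (cases "a \<in> B")
          case True
          then have "(A \<inter> B) - {a} = (A - {a}) \<inter> B" by auto
          then show ?thesis using D(5)[OF A'(2) 2(2)] by simp
        next
          case False
          then have "A \<inter> B = (A - {a}) \<inter> B" by auto
          then show ?thesis using D(5)[OF A'(2) 2(2)] by simp
        qed
      next
        case 3
        then have B': "a \<in> B" "B - {a} \<in> D" using B by (auto simp: mem_lat_ext)
        show ?thesis
        proof (cases "a \<in> A")
          case True
          then have "(A \<inter> B) - {a} = A \<inter> (B - {a})" by auto
          then show ?thesis using D(5)[OF 3(1) B'(2)] by simp
        next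
          case False
          then have "A \<inter> B = A \<inter> (B - {a})" by auto
          then show ?thesis using D(5)[OF 3(1) B'(2)] by simp
        qed
      next
        case 4
        then have A': "a \<in> A" "A - {a} \<in> D" using A by (auto simp: mem_lat_ext)
        have B': "a \<in> B" "B - {a} \<in> D" using 4 B by (auto simp: mem_lat_ext)
        have "(A \<inter> B) - {a} = (A - {a}) \<inter> (B - {a})" by auto
        then show ?thesis using D(5)[OF A'(2) B'(2)] by simp
      qed
    qed
    moreover have "(A \<inter> B) - {a} \<in> D \<Longrightarrow> a \<notin> A \<inter> B \<Longrightarrow> A \<inter> B \<in> D" by simp
    ultimately show ?thesis unfolding mem_lat_ext by (cases "a \<in> A \<inter> B") auto
  qed
  have acc: "\<exists>x\<in>A. A - {x} \<in> ?D" if A: "A \<in> ?D" "A \<noteq> {}" for A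
  proof (cases "A \<in> D")
    case True
    then obtain x where "x \<in> A" "A - {x} \<in> D" using D(6) A(2) by blast
    then show ?thesis by (auto simp: mem_lat_ext)
  next
    case False
    then have "a \<in> A" "A - {a} \<in> D" using A by (auto simp: mem_lat_ext)
    then show ?thesis by (auto simp: mem_lat_ext)
  qed
  show ?thesis unfolding acc_lattice_def
    apply (intro conjI)
    using sub e apply simp_all
    using un int apply simp
    using acc by simp
qed


lemma card_sub1: "S \<subseteq> {a} \<Longrightarrow> card S = (if a \<in> S then 1 else 0)"
  by (cases "a \<in> S") (auto simp: subset_singleton_iff)

context
  fixes E D rho a
  assumes U: "umatroid E D rho" and aE: "a \<in> E"
begin

lemma L: "acc_lattice E D" using U unfolding umatroid_def by simp

lemma L': "acc_lattice E (lat_ext D a)" using lat_ext_lattice[OF L aE] .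

lemma inE: "X \<in> lat_ext D a \<Longrightarrow> X \<subseteq> E" using al_D(1)[OF L'] by blast

lemma f_D: "X \<in> D \<Longrightarrow> gen_ext D rho a X = rho X" by (simp add: gen_ext_def)

lemma f_notD:
  assumes X: "X \<in> lat_ext D a" "X \<notin> D"
  shows "a \<in> X" "X - {a} \<in> D" "sup_D D X \<in> D" "X \<subseteq> sup_D D X"
    "gen_ext D rho a X \<le> rho (X - {a}) + 1" "gen_ext D rho a X \<le> rho (sup_D D X)"
    "gen_ext D rho a X = rho (X - {a}) + 1 \<or> gen_ext D rho a X = rho (sup_D D X)"
proof -
  note D = um_D[OF U]
  show a: "a \<in> X" "X - {a} \<in> D" using X by (auto simp: mem_lat_ext)
  have XE: "X \<subseteq> E" using inE X(1) .
  show s: "sup_D D X \<in> D" "X \<subseteq> sup_D D X" using sup_props[OF L D(1) XE] by auto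
  have le: "rho (X - {a}) \<le> rho (sup_D D X)" using D(9)[OF a(2) s(1)] s(2) by auto
  show "gen_ext D rho a X \<le> rho (X - {a}) + 1" "gen_ext D rho a X \<le> rho (sup_D D X)"
    "gen_ext D rho a X = rho (X - {a}) + 1 \<or> gen_ext D rho a X = rho (sup_D D X)"
    using X(2) le unfolding gen_ext_def by auto
qed

lemma f_bound:
  assumes X: "X \<in> lat_ext D a" and W: "W \<in> D" "X - W \<subseteq> {a}"
  shows "gen_ext D rho a X \<le> rho W + card (X - W)"
proof -
  note D = um_D[OF U]
  show ?thesis
  proof (cases "X \<in> D")
    case True
    show ?thesis
    proof (cases "a \<in> X - W")
      case True
      have e: "X \<union> W = insert a W" using W True by auto
      hence iD: "insert a W \<in> D" using D(5)[OF \<open>X \<in> D\<close> W(1)] by simp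
      have "rho X \<le> rho (insert a W)" using D(9)[OF \<open>X \<in> D\<close> iD] e by auto
      also have "\<dots> \<le> rho W + 1" using D(11)[OF W(1) iD] .
      finally show ?thesis using True W(2) f_D[OF \<open>X \<in> D\<close>] card_sub1[OF W(2)] by simp
    next
      case False
      hence "X \<subseteq> W" using W by auto
      then show ?thesis using D(9)[OF \<open>X \<in> D\<close> W(1)] f_D[OF \<open>X \<in> D\<close>] by simp
    qed
  next
    case False
    note F = f_notD[OF X False]
    show ?thesis
    proof (cases "a \<in> W")
      case True
      hence "X \<subseteq> W" using W by auto
      hence "sup_D D X \<subseteq> W" using sup_props(3)[OF L D(1) inE[OF X] W(1)] by simp
      hence "rho (sup_D D X) \<le> rho W" using D(9)[OF F(3) W(1)] by simp
      then show ?thesis using F(6) by simp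
    next
      case False
      hence "X - {a} \<subseteq> W" "a \<in> X - W" using W F(1) by auto
      then show ?thesis using D(9)[OF F(2) W(1)] F(5) card_sub1[OF W(2)] by simp
    qed
  qed
qed

lemma f_char:
  assumes X: "X \<in> lat_ext D a"
  shows "\<exists>W\<in>D. X - W \<subseteq> {a} \<and> gen_ext D rho a X = rho W + card (X - W)"
proof (cases "X \<in> D")
  case True
  then show ?thesis using f_D[OF True] by (intro bexI[of _ X]) auto
next
  case False
  note F = f_notD[OF X False]
  from F(7) show ?thesis
  proof
    assume h: "gen_ext D rho a X = rho (X - {a}) + 1"
    have "X - (X - {a}) = {a}" using F(1) by auto
    then show ?thesis using h F(2) by (intro bexI[of _ "X - {a}"]) auto
  next
    assume h: "gen_ext D rho a X = rho (sup_D D X)"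
    have e1: "X - sup_D D X \<subseteq> {a}" using F(4) by auto
    have e2: "card (X - sup_D D X) = 0" using F(4) by (metis Diff_eq_empty_iff card.empty)
    show ?thesis using F(3) e1 e2 h by (metis add_0_right)
  qed
qed

lemma f_submod:
  assumes A: "A \<in> lat_ext D a" and B: "B \<in> lat_ext D a"
  shows "gen_ext D rho a (A \<union> B) + gen_ext D rho a (A \<inter> B) \<le> gen_ext D rho a A + gen_ext D rho a B"
proof -
  note D = um_D[OF U]
  obtain W1 where W1: "W1 \<in> D" "A - W1 \<subseteq> {a}" "gen_ext D rho a A = rho W1 + card (A - W1)"
    using f_char[OF A] by blast
  obtain W2 where W2: "W2 \<in> D" "B - W2 \<subseteq> {a}" "gen_ext D rho a B = rho W2 + card (B - W2)"
    using f_char[OF B] by blast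
  have U1: "A \<union> B \<in> lat_ext D a" "A \<inter> B \<in> lat_ext D a"
    using al_D(4,5)[OF L'] A B by auto
  have s1: "(A \<union> B) - (W1 \<union> W2) \<subseteq> {a}" "(A \<inter> B) - (W1 \<inter> W2) \<subseteq> {a}" using W1(2) W2(2) by auto
  have b1: "gen_ext D rho a (A \<union> B) \<le> rho (W1 \<union> W2) + card ((A \<union> B) - (W1 \<union> W2))"
    using f_bound[OF U1(1) D(5)[OF W1(1) W2(1)] s1(1)] .
  have b2: "gen_ext D rho a (A \<inter> B) \<le> rho (W1 \<inter> W2) + card ((A \<inter> B) - (W1 \<inter> W2))"
    using f_bound[OF U1(2) D(6)[OF W1(1) W2(1)] s1(2)] .
  have sm: "rho (W1 \<union> W2) + rho (W1 \<inter> W2) \<le> rho W1 + rho W2" using D(10)[OF W1(1) W2(1)] .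
  have cc: "card ((A \<union> B) - (W1 \<union> W2)) + card ((A \<inter> B) - (W1 \<inter> W2)) \<le> card (A - W1) + card (B - W2)"
    using card_sub1[OF s1(1)] card_sub1[OF s1(2)] card_sub1[OF W1(2)] card_sub1[OF W2(2)]
    by auto
  show ?thesis using b1 b2 sm cc W1(3) W2(3) by linarith
qed

lemma f_diff:
  assumes A: "A \<in> lat_ext D a" and B: "B \<in> lat_ext D a" and AB: "A \<subseteq> B"
  shows "gen_ext D rho a B \<le> gen_ext D rho a A + card (B - A)"
proof -
  note D = um_D[OF U]
  obtain W where W: "W \<in> D" "A - W \<subseteq> {a}" "gen_ext D rho a A = rho W + card (A - W)"
    using f_char[OF A] by blast
  define IB where "IB = (if B \<in> D then B else B - {a})"
  have IB: "IB \<in> D" "B - IB \<subseteq> {a}" "IB \<subseteq> B"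
    using B unfolding IB_def by (auto simp: mem_lat_ext)
  have W'D: "W \<union> IB \<in> D" using D(5)[OF W(1) IB(1)] .
  have s: "B - (W \<union> IB) \<subseteq> {a}" using IB(2) by auto
  have b: "gen_ext D rho a B \<le> rho (W \<union> IB) + card (B - (W \<union> IB))" using f_bound[OF B W'D s] .
  have rd: "rho (W \<union> IB) \<le> rho W + card ((W \<union> IB) - W)" using rank_diff[OF U W'D W(1)] by auto
  have finB: "finite B" using inE[OF B] D(1) by (rule finite_subset)
  have c1: "card ((W \<union> IB) - W) + card (B - (W \<union> IB)) = card (B - W)"
  proof -
    have "(W \<union> IB) - W = IB - W" by auto
    moreover have "B - W = (IB - W) \<union> (B - (W \<union> IB))" using IB(3) by auto
    moreover have "(IB - W) \<inter> (B - (W \<union> IB)) = {}" by auto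
    moreover have "finite (IB - W)" "finite (B - (W \<union> IB))" using finB IB(3) by (auto intro: finite_subset)
    ultimately show ?thesis by (simp add: card_Un_disjoint)
  qed
  have c2: "card (B - W) \<le> card (A - W) + card (B - A)"
  proof -
    have "B - W \<subseteq> (A - W) \<union> (B - A)" by auto
    moreover have "finite ((A - W) \<union> (B - A))" using finB AB by (auto intro: finite_subset)
    ultimately have "card (B - W) \<le> card ((A - W) \<union> (B - A))"
      by (intro card_mono)
    also have "\<dots> \<le> card (A - W) + card (B - A)" by (rule card_Un_le)
    finally show ?thesis .
  qed
  show ?thesis using b rd c1 c2 W(3) by linarith
qed

lemma f_mono:
  assumes A: "A \<in> lat_ext D a" and B: "B \<in> lat_ext D a" and AB: "A \<subseteq> B"
  shows "gen_ext D rho a A \<le> gen_ext D rho a B"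
proof -
  note D = um_D[OF U]
  obtain W where W: "W \<in> D" "B - W \<subseteq> {a}" "gen_ext D rho a B = rho W + card (B - W)"
    using f_char[OF B] by blast
  have s: "A - W \<subseteq> {a}" using W(2) AB by auto
  have finB: "finite B" using inE[OF B] D(1) by (rule finite_subset)
  have "card (A - W) \<le> card (B - W)" using finB AB by (intro card_mono) auto
  then show ?thesis using f_bound[OF A W(1) s] W(3) by linarith
qed

lemma gen_ext_umatroid: "umatroid E (lat_ext D a) (gen_ext D rho a)"
proof -
  note D = um_D[OF U]
  have "gen_ext D rho a {} = 0" using f_D[OF D(3)] D(8) by simp
  moreover have "\<forall>A\<in>lat_ext D a. \<forall>x. insert x A \<in> lat_ext D a \<longrightarrow>
      gen_ext D rho a (insert x A) \<le> gen_ext D rho a A + 1"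
  proof (intro ballI allI impI)
    fix A x assume A: "A \<in> lat_ext D a" and B: "insert x A \<in> lat_ext D a"
    have "insert x A - A \<subseteq> {x}" by auto
    hence "card (insert x A - A) \<le> card {x}" by (intro card_mono) auto
    hence "card (insert x A - A) \<le> 1" by simp
    then show "gen_ext D rho a (insert x A) \<le> gen_ext D rho a A + 1"
      using f_diff[OF A B subset_insertI] by linarith
  qed
  ultimately show ?thesis unfolding umatroid_def
    using D(1) L' f_submod f_mono by blast
qed

end


lemma iter_um:
  "umatroid E D rho \<Longrightarrow> set as \<subseteq> E \<Longrightarrow>
   umatroid E (fst (gen_iter D rho as)) (snd (gen_iter D rho as)) \<and> D \<subseteq> fst (gen_iter D rho as) \<and>
   (\<forall>S\<in>D. snd (gen_iter D rho as) S = rho S)"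
proof (induction as arbitrary: D rho)
  case Nil
  then show ?case by simp
next
  case (Cons a as)
  have aE: "a \<in> E" "set as \<subseteq> E" using Cons.prems by auto
  have U': "umatroid E (lat_ext D a) (gen_ext D rho a)" using gen_ext_umatroid[OF Cons.prems(1) aE(1)] .
  note IH = Cons.IH[OF U' aE(2)]
  have sub: "D \<subseteq> lat_ext D a" unfolding lat_ext_def by auto
  have ag: "\<forall>S\<in>D. gen_ext D rho a S = rho S" by (simp add: gen_ext_def)
  show ?case using IH sub ag by auto
qed

lemma iter_cover: "\<forall>S\<in>D. \<forall>Y. Y \<subseteq> set as \<longrightarrow> S \<union> Y \<in> fst (gen_iter D rho as)"
proof (induction as arbitrary: D rho)
  case Nil
  then show ?case by simp
next
  case (Cons a as)
  show ?case
  proof (intro ballI allI impI)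
    fix S Y assume S: "S \<in> D" and Y: "Y \<subseteq> set (a # as)"
    define S' where "S' = (if a \<in> Y then insert a S else S)"
    have S': "S' \<in> lat_ext D a" unfolding S'_def lat_ext_def using S by auto
    have Y': "Y - {a} \<subseteq> set as" using Y by auto
    have e: "S' \<union> (Y - {a}) = S \<union> Y" unfolding S'_def by auto
    have "S' \<union> (Y - {a}) \<in> fst (gen_iter (lat_ext D a) (gen_ext D rho a) as)"
      using Cons.IH S' Y' by blast
    then show "S \<union> Y \<in> fst (gen_iter D rho (a # as))" using e by simp
  qed
qed

lemma dom_step:
  assumes L: "acc_lattice E D" and fin: "finite E" and aE: "a \<in> E"
    and mono: "\<And>A B. A \<subseteq> B \<Longrightarrow> B \<subseteq> E \<Longrightarrow> rho' A \<le> rho' B"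
    and unit: "\<And>A x. insert x A \<subseteq> E \<Longrightarrow> rho' (insert x A) \<le> rho' A + 1"
    and le: "\<And>S. S \<in> D \<Longrightarrow> rho' S \<le> rho S"
    and S: "S \<in> lat_ext D a"
  shows "rho' S \<le> gen_ext D rho a S"
proof (cases "S \<in> D")
  case True
  then show ?thesis using le by (simp add: gen_ext_def)
next
  case False
  have SE: "S \<subseteq> E" using al_D(1)[OF lat_ext_lattice[OF L aE]] S by blast
  have a: "a \<in> S" "S - {a} \<in> D" using S False by (auto simp: mem_lat_ext)
  have ins: "insert a (S - {a}) = S" using a by auto
  have s: "sup_D D S \<in> D" "S \<subseteq> sup_D D S" using sup_props[OF L fin SE] by auto
  have sE: "sup_D D S \<subseteq> E" using s(1) al_D(1)[OF L] by blast
  have r1: "rho' S \<le> rho (S - {a}) + 1"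
    using unit[of a "S - {a}"] ins SE aE le[OF a(2)] by simp
  have r2: "rho' S \<le> rho (sup_D D S)" using mono[OF s(2) sE] le[OF s(1)] by simp
  show ?thesis using False r1 r2 unfolding gen_ext_def by auto
qed

lemma iter_dom:
  assumes mono: "\<And>A B. A \<subseteq> B \<Longrightarrow> B \<subseteq> E \<Longrightarrow> rho' A \<le> rho' B"
    and unit: "\<And>A x. insert x A \<subseteq> E \<Longrightarrow> rho' (insert x A) \<le> rho' A + 1"
    and fin: "finite E"
  shows "acc_lattice E D \<Longrightarrow> set as \<subseteq> E \<Longrightarrow> (\<forall>S\<in>D. rho' S \<le> rho S) \<Longrightarrow>
    \<forall>S\<in>fst (gen_iter D rho as). rho' S \<le> snd (gen_iter D rho as) S"
proof (induction as arbitrary: D rho)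
  case Nil
  then show ?case by simp
next
  case (Cons a as)
  have aE: "a \<in> E" "set as \<subseteq> E" using Cons.prems by auto
  have L': "acc_lattice E (lat_ext D a)" using lat_ext_lattice[OF Cons.prems(1) aE(1)] .
  have "\<forall>S\<in>lat_ext D a. rho' S \<le> gen_ext D rho a S"
    using dom_step[OF Cons.prems(1) fin aE(1) mono unit] Cons.prems(3) by blast
  then show ?case using Cons.IH[OF L' aE(2)] by simp
qed

lemma full_ext:
  assumes U: "umatroid E D rho" and cs: "set cs = E - Atom D"
  shows "fst (gen_iter D rho cs) = Pow E" "umatroid E (Pow E) (snd (gen_iter D rho cs))"
    "\<forall>S\<in>D. snd (gen_iter D rho cs) S = rho S"
proof -
  note D = um_D[OF U]
  have csE: "set cs \<subseteq> E" using cs by auto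
  note I = iter_um[OF U csE]
  have sub: "fst (gen_iter D rho cs) \<subseteq> Pow E"
    using I al_D(1)[of E "fst (gen_iter D rho cs)"] unfolding umatroid_def by blast
  have sup: "Pow E \<subseteq> fst (gen_iter D rho cs)"
  proof
    fix X assume "X \<in> Pow E"
    hence XE: "X \<subseteq> E" by simp
    have fX: "finite (X \<inter> Atom D)" using XE D(1) by (meson finite_Int finite_subset)
    have e1: "\<Union>((\<lambda>x. {x}) ` (X \<inter> Atom D)) = X \<inter> Atom D" by auto
    have "(\<lambda>x. {x}) ` (X \<inter> Atom D) \<subseteq> D" unfolding Atom_def by auto
    hence "\<Union>((\<lambda>x. {x}) ` (X \<inter> Atom D)) \<in> D"
      using Union_in_aux[of "(\<lambda>x. {x}) ` (X \<inter> Atom D)" D] fX D(3) D(5) by blast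
    hence inD: "X \<inter> Atom D \<in> D" using e1 by simp
    have Y: "X - Atom D \<subseteq> set cs" using cs XE by auto
    have "X = (X \<inter> Atom D) \<union> (X - Atom D)" by auto
    then show "X \<in> fst (gen_iter D rho cs)" using iter_cover inD Y by metis
  qed
  show F: "fst (gen_iter D rho cs) = Pow E" using sub sup by blast
  show "umatroid E (Pow E) (snd (gen_iter D rho cs))" using I F by simp
  show "\<forall>S\<in>D. snd (gen_iter D rho cs) S = rho S" using I by blast
qed

lemma full_dom:
  assumes U: "umatroid E D rho" and cs: "set cs = E - Atom D"
    and U': "umatroid E (Pow E) rho'" and ag: "\<forall>S\<in>D. rho' S \<le> rho S"
  shows "\<forall>S. S \<subseteq> E \<longrightarrow> rho' S \<le> snd (gen_iter D rho cs) S"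
proof -
  note D' = um_D[OF U']
  have mono: "\<And>A B. A \<subseteq> B \<Longrightarrow> B \<subseteq> E \<Longrightarrow> rho' A \<le> rho' B"
    using D'(9) by auto
  have unit: "\<And>A x. insert x A \<subseteq> E \<Longrightarrow> rho' (insert x A) \<le> rho' A + 1"
    using D'(11) by auto
  have L: "acc_lattice E D" using U unfolding umatroid_def by simp
  have csE: "set cs \<subseteq> E" using cs by auto
  have "\<forall>S\<in>fst (gen_iter D rho cs). rho' S \<le> snd (gen_iter D rho cs) S"
    using iter_dom[OF mono unit D'(1) L csE ag] .
  then show ?thesis using full_ext(1)[OF U cs] by auto
qed

lemma um_restrict:
  assumes U: "umatroid E P r" and L: "acc_lattice E D'" and sub: "D' \<subseteq> P"
  shows "umatroid E D' r"
proof -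
  note D = um_D[OF U]
  have a: "\<forall>A\<in>D'. \<forall>B\<in>D'. A \<subseteq> B \<longrightarrow> r A \<le> r B" using D(9) sub by blast
  have b: "\<forall>A\<in>D'. \<forall>B\<in>D'. r (A \<union> B) + r (A \<inter> B) \<le> r A + r B" using D(10) sub by blast
  have c: "\<forall>A\<in>D'. \<forall>x. insert x A \<in> D' \<longrightarrow> r (insert x A) \<le> r A + 1" using D(11) sub by blast
  show ?thesis unfolding umatroid_def using D(1) L D(8) a b c by simp
qed

theorem theorem4p12:
  fixes E :: "'a set" and D :: "'a set set" and rho :: "'a set \<Rightarrow> nat" and as :: "'a list"
  assumes U: "umatroid E D rho"
    and as: "distinct as" "set as = E - Atom D"
  shows
    "fst (gen_iter D rho as) = Pow E \<and>
     umatroid E (Pow E) (snd (gen_iter D rho as)) \<and>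
     (\<forall>S\<in>D. snd (gen_iter D rho as) S = rho S) \<and>
     (\<forall>rho'. umatroid E (Pow E) rho' \<and> (\<forall>S\<in>D. rho' S = rho S) \<longrightarrow>
        (\<forall>S. S \<subseteq> E \<longrightarrow> rho' S \<le> snd (gen_iter D rho as) S)) \<and>
    (\<forall>bs. distinct bs \<and> set bs = E - Atom D \<longrightarrow>
       (\<forall>S. S \<subseteq> E \<longrightarrow> snd (gen_iter D rho bs) S = snd (gen_iter D rho as) S)) \<and>
    (\<forall>D'. acc_lattice E D' \<and> D \<subseteq> D' \<longrightarrow>
       umatroid E D' (snd (gen_iter D rho as)) \<and>
       (\<forall>rho'. umatroid E D' rho' \<and> (\<forall>S\<in>D. rho' S = rho S) \<longrightarrow>
          (\<forall>S\<in>D'. rho' S \<le> snd (gen_iter D rho as) S)))"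
proof -
  note X = full_ext[OF U as(2)]
  have P4: "\<forall>rho'. umatroid E (Pow E) rho' \<and> (\<forall>S\<in>D. rho' S = rho S) \<longrightarrow>
        (\<forall>S. S \<subseteq> E \<longrightarrow> rho' S \<le> snd (gen_iter D rho as) S)"
    using full_dom[OF U as(2)] by simp
  have P5: "\<forall>bs. distinct bs \<and> set bs = E - Atom D \<longrightarrow>
       (\<forall>S. S \<subseteq> E \<longrightarrow> snd (gen_iter D rho bs) S = snd (gen_iter D rho as) S)"
  proof (intro allI impI)
    fix bs S assume bs: "distinct bs \<and> set bs = E - Atom D" and S: "S \<subseteq> E"
    note Y = full_ext[OF U conjunct2[OF bs]]
    have "snd (gen_iter D rho bs) S \<le> snd (gen_iter D rho as) S"
      using full_dom[OF U as(2) Y(2)] Y(3) S by simp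
    moreover have "snd (gen_iter D rho as) S \<le> snd (gen_iter D rho bs) S"
      using full_dom[OF U conjunct2[OF bs] X(2)] X(3) S by simp
    ultimately show "snd (gen_iter D rho bs) S = snd (gen_iter D rho as) S" by simp
  qed
  have P6: "\<forall>D'. acc_lattice E D' \<and> D \<subseteq> D' \<longrightarrow>
       umatroid E D' (snd (gen_iter D rho as)) \<and>
       (\<forall>rho'. umatroid E D' rho' \<and> (\<forall>S\<in>D. rho' S = rho S) \<longrightarrow>
          (\<forall>S\<in>D'. rho' S \<le> snd (gen_iter D rho as) S))"
  proof (intro allI impI conjI ballI)
    fix D' assume h: "acc_lattice E D' \<and> D \<subseteq> D'"
    have DP: "D' \<subseteq> Pow E" using al_D(1) h by blast
    show "umatroid E D' (snd (gen_iter D rho as))" using um_restrict[OF X(2) _ DP] h by blast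
    fix rho' S assume r: "umatroid E D' rho' \<and> (\<forall>S\<in>D. rho' S = rho S)" and S: "S \<in> D'"
    have "finite (E - Atom D')" using um_D(1)[OF U] by simp
    then obtain cs where cs: "set cs = E - Atom D'" using finite_list by blast
    note Z = full_ext[OF conjunct1[OF r] cs]
    have ag: "\<forall>T\<in>D. snd (gen_iter D' rho' cs) T \<le> rho T" using Z(3) r h by auto
    have "snd (gen_iter D' rho' cs) S \<le> snd (gen_iter D rho as) S"
      using full_dom[OF U as(2) Z(2) ag] S DP by auto
    then show "rho' S \<le> snd (gen_iter D rho as) S" using Z(3) S by simp
  qed
  show ?thesis using X P4 P5 P6 by simp
qed

end
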